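(* Let $G=(V,E)$ be any finite directed graph and let $s\in V$ be a start vertex. Then, in the two-handed tile assembly model with (possibly negative) glue strengths and a diagonal glue function described in the context, there exists an initial assembly set $T$ that walks $G$ (from start vertex $s$, with respect to some label $\ell$) and is fuel efficient. Further, $T$ contains at most $O(|V|+|E|)$ distinct assemblies, each of $O(1)$ size (number of tiles bounded by a constant independent of $G$).
   Context: Model. Fix an alphabet $\Pi$ of glue types; each $g\in\Pi$ has a rational strength $str(g)$, which may be negative. A tile is a unit square of fixed orientation (no rotation) with at most one glue type on each face, placed at the center of that face; a tile may also carry a finite string label. An assembly is a set of tiles placed in the plane with pairwise non-overlapping interiors. The bond graph $G_\Upsilon$ of an assembly $\Upsilon$ has the tiles as vertices, and the weight of the edge between two tiles is the sum of strengths of the overlapping glue points of the two tiles that have equal glue type (overlapping glues of different types contribute $0$; this is the diagonal glue function). An assembly $C$ is stable if the min-cut of $G_C$ is at least $1$, and unstable otherwise. $C$ is breakable into $A$ and $B$ if $G_C$ has a cut separating it into $A$ and $B$ of weight less than $1$. Assemblies $A$ and $B$ are combinable into $C$ if some translate $B'$ of $B$ satisfies that $C=A\cup B'$ is an assembly (no overlaps) and the cut of $G_{A\cup B'}$ into $A$ and $B'$ has weight at least $1$ ($C$ need not be stable). For an initial assembly set $T$ (whose elements are stable assemblies), the set $\texttt{PROD}_T$ of producible assemblies is the smallest set containing $T$ such that whenever $A,B\in\texttt{PROD}_T$ are combinable into $C$ then $C\in\texttt{PROD}_T$, and whenever $C\in\texttt{PROD}_T$ is breakable into $A$ and $B$ then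 $A,B\in\texttt{PROD}_T$. $|a|$ denotes the number of tiles of assembly $a$. Assembly sequences. A valid assembly sequence for $T$ is a sequence $S=\langle a_1,\dots,a_k\rangle$ with each $a_i\in\texttt{PROD}_T$ such that for each $i<k$, either $a_i$ is combinable with some $b\in\texttt{PROD}_T$ into $a_{i+1}$, or $a_i$ is breakable into $a_{i+1}$ and some assembly $b$. It is $\ell$-focused (for a label $\ell$) if every $a_i$ contains at least one tile with label $\ell$, and nascent if $a_1\in T$. For a partial function $f:\texttt{PROD}_T\to V$, $f'(\langle a_1,\dots,a_k\rangle)$ is the sequence obtained by replacing each $a_i$ by $f(a_i)$ when defined and deleting $a_i$ otherwise. Walking. Given a directed graph $G=(V,E)$, start vertex $s$, and an initial assembly set $T$ in which some tiles are labeled $\ell$, $T$ walks $G$ if there is a partial function $f:\texttt{PROD}_T\to V$ such that: (1) for every $\ell$-focused nascent valid assembly sequence $S$ of $T$, $f'(S)$ is a valid walk in $G$ starting at $s$; (2) for every walk $W$ in $G$ starting at $s$, there is a nascent $\ell$-focused valid assembly sequence $S$ with $f'(S)=W$; (3) for every edge $(u,v)\in E$ and every $\ell$-focused valid assembly sequence $S$ with $f'(S)=\langle u\rangle$, there is an $\ell$-focused valid assembly sequence $R$ having $S$ as a prefix with $f'(R)=\langle u,v\rangle$. Fuel. For assemblies $a,b$, $fuel(a,b)=|b|-|a|$ if $|b|\ge|a|$ and $0$ otherwise; for $A=\langle a_1,\dots,a_k\rangle$, $fuel(A)=\sum_{i=1}^{k-1} fuel(a_i,a_{i+1})$. A $T$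 walking $G$ is fuel efficient if there is a constant $c$ such that for all $\ell$-focused nascent valid assembly sequences $S$, $fuel(S)/|f'(S)|\le c$ (i.e. $fuel(S)/|f'(S)|=O(1)$). *)

theory Defs
  imports Complex_Main
begin

datatype dir = North | East | South | West

type_synonym 'g tiletype = "(dir \<Rightarrow> 'g option) \<times> string option"

text \<open>A placed tile: the centre of the unit square (in the real plane) and its tile type.\<close>
type_synonym 'g ptile = "(real \<times> real) \<times> 'g tiletype"

type_synonym 'g assembly = "'g ptile set"

definition tpos :: "'g ptile \<Rightarrow> real \<times> real" where
  "tpos t = fst t"

definition tglue :: "'g ptile \<Rightarrow> dir \<Rightarrow> 'g option" where
  "tglue t d = fst (snd t) d"

definition tlabel :: "'g ptile \<Rightarrow> string option" where
  "tlabel t = snd (snd t)"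

fun dir_offset :: "dir \<Rightarrow> real \<times> real" where
  "dir_offset North = (0, 1/2)"
| "dir_offset East = (1/2, 0)"
| "dir_offset South = (0, -1/2)"
| "dir_offset West = (-1/2, 0)"

definition glue_point :: "'g ptile \<Rightarrow> dir \<Rightarrow> real \<times> real" where
  "glue_point t d = (fst (tpos t) + fst (dir_offset d), snd (tpos t) + snd (dir_offset d))"

definition all_dirs :: "dir set" where
  "all_dirs = {North, East, South, West}"

text \<open>Interiors of the unit squares centred at the two tiles' positions intersect.\<close>
definition overlap :: "'g ptile \<Rightarrow> 'g ptile \<Rightarrow> bool" where
  "overlap t1 t2 \<longleftrightarrow> \<bar>fst (tpos t1) - fst (tpos t2)\<bar> < 1 \<and> \<bar>snd (tpos t1) - snd (tpos t2)\<bar> < 1"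

definition is_assembly :: "'g assembly \<Rightarrow> bool" where
  "is_assembly A \<longleftrightarrow> finite A \<and> A \<noteq> {} \<and> (\<forall>t1\<in>A. \<forall>t2\<in>A. t1 \<noteq> t2 \<longrightarrow> \<not> overlap t1 t2)"

text \<open>Weight of the bond-graph edge between two tiles (diagonal glue function):
  sum of strengths of overlapping glue points of equal glue type.\<close>
definition edge_weight :: "('g \<Rightarrow> rat) \<Rightarrow> 'g ptile \<Rightarrow> 'g ptile \<Rightarrow> rat" where
  "edge_weight str t1 t2 =
     (\<Sum>d1\<in>all_dirs. \<Sum>d2\<in>all_dirs.
        (case (tglue t1 d1, tglue t2 d2) of
           (Some g1, Some g2) \<Rightarrow>
              if g1 = g2 \<and> glue_point t1 d1 = glue_point t2 d2 then str g1 else 0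
         | _ \<Rightarrow> 0))"

definition cut_weight :: "('g \<Rightarrow> rat) \<Rightarrow> 'g assembly \<Rightarrow> 'g assembly \<Rightarrow> rat" where
  "cut_weight str A B = (\<Sum>a\<in>A. \<Sum>b\<in>B. edge_weight str a b)"

definition stable_asm :: "('g \<Rightarrow> rat) \<Rightarrow> 'g assembly \<Rightarrow> bool" where
  "stable_asm str C \<longleftrightarrow> is_assembly C \<and>
     (\<forall>A B. A \<union> B = C \<and> A \<inter> B = {} \<and> A \<noteq> {} \<and> B \<noteq> {} \<longrightarrow> cut_weight str A B \<ge> 1)"

definition breakable :: "('g \<Rightarrow> rat) \<Rightarrow> 'g assembly \<Rightarrow> 'g assembly \<Rightarrow> 'g assembly \<Rightarrow> bool" where
  "breakable str C A B \<longleftrightarrow> is_assembly C \<and> A \<union> B = C \<and> A \<inter> B = {} \<and> A \<noteq> {} \<and> B \<noteq> {}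
      \<and> cut_weight str A B < 1"

definition translate :: "real \<times> real \<Rightarrow> 'g assembly \<Rightarrow> 'g assembly" where
  "translate v B = (\<lambda>t. ((fst (tpos t) + fst v, snd (tpos t) + snd v), snd t)) ` B"

definition combinable :: "('g \<Rightarrow> rat) \<Rightarrow> 'g assembly \<Rightarrow> 'g assembly \<Rightarrow> 'g assembly \<Rightarrow> bool" where
  "combinable str A B C \<longleftrightarrow> is_assembly A \<and> is_assembly B \<and>
     (\<exists>v. let B' = translate v B in
        A \<inter> B' = {} \<and> C = A \<union> B' \<and> is_assembly C \<and> cut_weight str A B' \<ge> 1)"

inductive_set producible :: "('g \<Rightarrow> rat) \<Rightarrow> 'g assembly set \<Rightarrow> 'g assembly set"
  for str :: "'g \<Rightarrow> rat" and T :: "'g assembly set" where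
  init: "a \<in> T \<Longrightarrow> a \<in> producible str T"
| comb: "A \<in> producible str T \<Longrightarrow> B \<in> producible str T \<Longrightarrow> combinable str A B C \<Longrightarrow> C \<in> producible str T"
| brk1: "C \<in> producible str T \<Longrightarrow> breakable str C A B \<Longrightarrow> A \<in> producible str T"
| brk2: "C \<in> producible str T \<Longrightarrow> breakable str C A B \<Longrightarrow> B \<in> producible str T"

definition valid_seq :: "('g \<Rightarrow> rat) \<Rightarrow> 'g assembly set \<Rightarrow> 'g assembly list \<Rightarrow> bool" where
  "valid_seq str T S \<longleftrightarrow> S \<noteq> [] \<and> set S \<subseteq> producible str T \<and>
     (\<forall>i. Suc i < length S \<longrightarrow>
        (\<exists>b\<in>producible str T. combinable str (S ! i) b (S ! Suc i))
      \<or> (\<exists>b. breakable str (S ! i) (S ! Suc i) b))"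

definition focused :: "string \<Rightarrow> 'g assembly list \<Rightarrow> bool" where
  "focused l S \<longleftrightarrow> (\<forall>a\<in>set S. \<exists>t\<in>a. tlabel t = Some l)"

definition nascent :: "'g assembly set \<Rightarrow> 'g assembly list \<Rightarrow> bool" where
  "nascent T S \<longleftrightarrow> S \<noteq> [] \<and> hd S \<in> T"

definition fprime :: "('g assembly \<Rightarrow> 'v option) \<Rightarrow> 'g assembly list \<Rightarrow> 'v list" where
  "fprime f S = List.map_filter f S"

definition is_walk :: "('v \<times> 'v) set \<Rightarrow> 'v \<Rightarrow> 'v list \<Rightarrow> bool" where
  "is_walk E s W \<longleftrightarrow> W \<noteq> [] \<and> hd W = s \<and> (\<forall>i. Suc i < length W \<longrightarrow> (W ! i, W ! Suc i) \<in> E)"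

definition walking_fun ::
  "('g \<Rightarrow> rat) \<Rightarrow> 'g assembly set \<Rightarrow> string \<Rightarrow> 'v set \<Rightarrow> ('v \<times> 'v) set \<Rightarrow> 'v
     \<Rightarrow> ('g assembly \<Rightarrow> 'v option) \<Rightarrow> bool" where
  "walking_fun str T l V E s f \<longleftrightarrow>
     (\<forall>a v. f a = Some v \<longrightarrow> a \<in> producible str T \<and> v \<in> V)
   \<and> (\<forall>S. focused l S \<and> nascent T S \<and> valid_seq str T S \<longrightarrow> is_walk E s (fprime f S))
   \<and> (\<forall>W. is_walk E s W \<longrightarrow>
          (\<exists>S. nascent T S \<and> focused l S \<and> valid_seq str T S \<and> fprime f S = W))
   \<and> (\<forall>u v S. (u, v) \<in> E \<and> focused l S \<and> valid_seq str T S \<and> fprime f S = [u] \<longrightarrow>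
          (\<exists>R'. focused l (S @ R') \<and> valid_seq str T (S @ R') \<and> fprime f (S @ R') = [u, v]))"

definition walks :: "('g \<Rightarrow> rat) \<Rightarrow> 'g assembly set \<Rightarrow> string \<Rightarrow> 'v set \<Rightarrow> ('v \<times> 'v) set \<Rightarrow> 'v \<Rightarrow> bool" where
  "walks str T l V E s \<longleftrightarrow> (\<exists>f. walking_fun str T l V E s f)"

definition fuel_step :: "'g assembly \<Rightarrow> 'g assembly \<Rightarrow> nat" where
  "fuel_step a b = (if card b \<ge> card a then card b - card a else 0)"

definition fuel :: "'g assembly list \<Rightarrow> nat" where
  "fuel S = (\<Sum>i<length S - 1. fuel_step (S ! i) (S ! Suc i))"

definition walks_fuel_efficiently ::
  "('g \<Rightarrow> rat) \<Rightarrow> 'g assembly set \<Rightarrow> string \<Rightarrow> 'v set \<Rightarrow> ('v \<times> 'v) set \<Rightarrow> 'v \<Rightarrow> bool" where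
  "walks_fuel_efficiently str T l V E s \<longleftrightarrow>
     (\<exists>f. walking_fun str T l V E s f \<and>
        (\<exists>c::real. \<forall>S. focused l S \<and> nascent T S \<and> valid_seq str T S \<longrightarrow>
            real (fuel S) / real (length (fprime f S)) \<le> c))"

end

theory Submission
  imports Defs
begin

fun opp :: "dir \<Rightarrow> dir" where
  "opp North = South" | "opp South = North" | "opp East = West" | "opp West = East"

fun nb :: "real \<times> real \<Rightarrow> dir \<Rightarrow> real \<times> real" where
  "nb (x,y) North = (x, y+1)" | "nb (x,y) South = (x, y-1)"
| "nb (x,y) East = (x+1, y)" | "nb (x,y) West = (x-1, y)"

lemma gp_opp_iff: "glue_point a d = glue_point b (opp d) \<longleftrightarrow> tpos b = nb (tpos a) d"
  by (cases d; cases "tpos a"; cases "tpos b") (auto simp: glue_point_def)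

lemma gp_other: "glue_point a d1 = glue_point b d2 \<Longrightarrow> d2 \<noteq> opp d1 \<Longrightarrow> overlap a b"
  by (cases d1; cases d2; cases "tpos a"; cases "tpos b") (auto simp: glue_point_def overlap_def)

lemma nb_inj: "nb P d = nb P d' \<Longrightarrow> d = d'"
  by (cases P; cases d; cases d') auto

definition term_w :: "('g \<Rightarrow> rat) \<Rightarrow> 'g ptile \<Rightarrow> 'g ptile \<Rightarrow> dir \<Rightarrow> dir \<Rightarrow> rat" where
  "term_w str t1 t2 d1 d2 = (case (tglue t1 d1, tglue t2 d2) of
           (Some g1, Some g2) \<Rightarrow>
              if g1 = g2 \<and> glue_point t1 d1 = glue_point t2 d2 then str g1 else 0
         | _ \<Rightarrow> 0)"

lemma ew_def2: "edge_weight str a b = (\<Sum>d1\<in>all_dirs. \<Sum>d2\<in>all_dirs. term_w str a b d1 d2)"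
  unfolding edge_weight_def term_w_def ..

lemma term_w_nz: "term_w str a b d1 d2 \<noteq> 0 \<Longrightarrow> \<exists>g. tglue a d1 = Some g \<and> tglue b d2 = Some g \<and> glue_point a d1 = glue_point b d2 \<and> term_w str a b d1 d2 = str g"
  unfolding term_w_def by (auto split: option.splits if_splits)

lemma M1:
  assumes "\<not> overlap a b" "edge_weight str a b \<noteq> 0"
  shows "\<exists>d g. tglue a d = Some g \<and> tglue b (opp d) = Some g \<and> tpos b = nb (tpos a) d \<and> edge_weight str a b = str g"
proof -
  have z: "term_w str a b d1 d2 = 0" if "d2 \<noteq> opp d1" for d1 d2
    using term_w_nz[of str a b d1 d2] gp_other[of a d1 b d2] that assms(1) by auto
  have z2: "term_w str a b d1 (opp d1) = 0" if "tpos b \<noteq> nb (tpos a) d1" for d1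
    using term_w_nz[of str a b d1 "opp d1"] gp_opp_iff[of a d1 b] that by auto
  from assms(2) obtain d1 d2 where nz: "term_w str a b d1 d2 \<noteq> 0"
    unfolding ew_def2 by (meson sum.not_neutral_contains_not_neutral)
  hence d2: "d2 = opp d1" using z by blast
  from term_w_nz[OF nz] obtain g where g: "tglue a d1 = Some g" "tglue b d2 = Some g"
    "glue_point a d1 = glue_point b d2" "term_w str a b d1 d2 = str g" by blast
  have pos: "tpos b = nb (tpos a) d1" using g(3) d2 gp_opp_iff[of a d1 b] by simp
  have zz: "term_w str a b d (opp d) = 0" if "d \<noteq> d1" for d
    using z2[of d] pos nb_inj[of "tpos a" d1 d] that by auto
  have "edge_weight str a b = term_w str a b d1 (opp d1)"
    unfolding ew_def2 all_dirs_def
    using z zz[of North] zz[of East] zz[of South] zz[of West] by (cases d1) (auto simp: d2)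
  then show ?thesis using g d2 pos by auto
qed

lemma term_w_sym: "term_w str a b d1 d2 = term_w str b a d2 d1"
  unfolding term_w_def by (auto split: option.splits)

lemma ew_sym: "edge_weight str a b = edge_weight str b a"
  unfolding ew_def2 by (subst sum.swap) (simp add: term_w_sym)


lemma cut_sym: "cut_weight str A B = cut_weight str B A"
  unfolding cut_weight_def by (subst sum.swap) (simp add: ew_sym)

lemma ew_nonneg: "(\<And>g. str g \<ge> 0) \<Longrightarrow> edge_weight str a b \<ge> 0"
  unfolding edge_weight_def by (intro sum_nonneg) (auto split: option.splits)

lemma cut_ge1:
  assumes "\<And>g. str g \<ge> 0" "finite A" "finite B" "a \<in> A" "b \<in> B"
  shows "cut_weight str A B \<ge> edge_weight str a b"
proof -
  have "edge_weight str a b \<le> (\<Sum>b'\<in>B. edge_weight str a b')"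
    using assms by (intro member_le_sum) (auto intro: ew_nonneg)
  also have "\<dots> \<le> cut_weight str A B" unfolding cut_weight_def
    using assms by (intro member_le_sum[where f="\<lambda>a. \<Sum>b'\<in>B. edge_weight str a b'"]) (auto intro!: sum_nonneg ew_nonneg)
  finally show ?thesis .
qed

lemma cut_ge2:
  assumes "\<And>g. str g \<ge> 0" "finite A" "finite B" "a1 \<in> A" "a2 \<in> A" "a1 \<noteq> a2" "b \<in> B"
  shows "cut_weight str A B \<ge> edge_weight str a1 b + edge_weight str a2 b"
proof -
  have "edge_weight str a1 b + edge_weight str a2 b = (\<Sum>a\<in>{a1,a2}. edge_weight str a b)"
    using assms by simp
  also have "\<dots> \<le> (\<Sum>a\<in>A. edge_weight str a b)"
    using assms by (intro sum_mono2) (auto intro: ew_nonneg)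
  also have "\<dots> \<le> (\<Sum>a\<in>A. \<Sum>b'\<in>B. edge_weight str a b')"
    using assms by (intro sum_mono member_le_sum) (auto intro: ew_nonneg)
  finally show ?thesis unfolding cut_weight_def .
qed


definition mkt :: "nat option \<Rightarrow> nat option \<Rightarrow> nat option \<Rightarrow> nat option \<Rightarrow> string option \<Rightarrow> nat tiletype" where
  "mkt n e s w lab = ((\<lambda>d. case d of North \<Rightarrow> n | East \<Rightarrow> e | South \<Rightarrow> s | West \<Rightarrow> w), lab)"

definition gam :: "nat \<Rightarrow> nat" where "gam v = 3 + 2*v"
definition bet :: "nat \<Rightarrow> nat" where "bet v = 4 + 2*v"

definition "seed0 = mkt (Some 2) (Some 1) None None (Some ''l'')"
definition "seed2 = mkt None (Some 0) (Some 2) None None"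
definition "topL a = mkt None (Some 1) (Some (gam a)) (Some 0) None"
definition "topR b = mkt None (Some 0) (Some (bet b)) (Some 1) None"
definition "botL a = mkt (Some (bet a)) (Some 1) None (Some 0) None"
definition "botR b = mkt (Some (gam b)) (Some 0) None (Some 1) None"

definition strg :: "nat \<Rightarrow> rat" where "strg g = (if g = 1 \<or> g = 2 then 1 else 1/2)"

fun ty :: "nat list \<Rightarrow> nat \<times> nat \<Rightarrow> nat tiletype" where
  "ty w (x,y) = (if x = 0 then (if y = 0 then seed0 else seed2)
     else if y = 0 then (if odd x then botR (w!(x-1)) else botL (w!(x-1)))
     else (if odd x then topL (w!(x-1)) else topR (w!(x-1))))"

definition m0 :: "nat list \<Rightarrow> nat" where
  "m0 w = (if even (length w - 1) then length w else length w - 1)"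
definition m1 :: "nat list \<Rightarrow> nat" where
  "m1 w = (if odd (length w - 1) then length w else length w - 1)"

definition cells :: "nat list \<Rightarrow> (nat \<times> nat) set" where
  "cells w = {(x,y). (y = 0 \<and> x \<le> m0 w) \<or> (y = 1 \<and> x \<le> m1 w)}"

definition mk :: "real \<times> real \<Rightarrow> nat list \<Rightarrow> nat \<times> nat \<Rightarrow> nat ptile" where
  "mk p w c = ((fst p + real (fst c), snd p + real (snd c)), ty w c)"

definition rib :: "real \<times> real \<Rightarrow> nat list \<Rightarrow> nat assembly" where
  "rib p w = mk p w ` cells w"

definition tb :: "real \<times> real \<Rightarrow> nat \<Rightarrow> nat \<Rightarrow> nat \<Rightarrow> nat assembly" where
  "tb q k a b = (if k = 1 then {((fst q + 1, snd q + 1), topL a), ((fst q + 2, snd q + 1), topR b)}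
                 else {((fst q + 2, snd q), botL a), ((fst q + 3, snd q), botR b)})"

lemma strg_nonneg: "strg g \<ge> 0" by (simp add: strg_def)

lemma tglue_simps[simp]:
  "tglue ((P, mkt n e s w lab)) North = n"
  "tglue ((P, mkt n e s w lab)) East = e"
  "tglue ((P, mkt n e s w lab)) South = s"
  "tglue ((P, mkt n e s w lab)) West = w"
  "tlabel ((P, mkt n e s w lab)) = lab"
  "tpos (P, X) = P"
  by (auto simp: tglue_def mkt_def tlabel_def tpos_def)

lemma finite_cells: "finite (cells w)"
proof -
  have "cells w \<subseteq> {..max (m0 w) (m1 w)} \<times> {..1}" unfolding cells_def by auto
  thus ?thesis by (rule finite_subset) auto
qed

lemma mk_inj: "inj_on (mk p w) X"
  by (auto simp: inj_on_def mk_def)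

lemma mk_overlap: "overlap (mk p w c) (mk p w c') \<Longrightarrow> c = c'"
proof -
  assume "overlap (mk p w c) (mk p w c')"
  hence "\<bar>real (fst c) - real (fst c')\<bar> < 1" "\<bar>real (snd c) - real (snd c')\<bar> < 1"
    by (auto simp: overlap_def mk_def tpos_def)
  hence "fst c = fst c'" "snd c = snd c'" by linarith+
  thus ?thesis by (simp add: prod_eq_iff)
qed

lemma rib_asm: "is_assembly (rib p w)"
  unfolding is_assembly_def rib_def
proof (intro conjI)
  show "finite (mk p w ` cells w)" using finite_cells by simp
  show "mk p w ` cells w \<noteq> {}" by (auto simp: cells_def)
  show "\<forall>t1\<in>mk p w ` cells w. \<forall>t2\<in>mk p w ` cells w. t1 \<noteq> t2 \<longrightarrow> \<not> overlap t1 t2"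
    using mk_overlap by blast
qed

lemma card_rib: "w \<noteq> [] \<Longrightarrow> card (rib p w) = 2 * length w + 1"
proof -
  assume w: "w \<noteq> []"
  have "card (rib p w) = card (cells w)" unfolding rib_def
    by (rule card_image) (rule mk_inj)
  also have "cells w = (\<lambda>x. (x,0::nat)) ` {..m0 w} \<union> (\<lambda>x. (x,1)) ` {..m1 w}"
    unfolding cells_def by auto
  also have "card \<dots> = (m0 w + 1) + (m1 w + 1)"
    by (subst card_Un_disjoint) (auto simp: card_image inj_on_def)
  also have "\<dots> = 2 * length w + 1" using w by (auto simp: m0_def m1_def)
  finally show ?thesis .
qed


definition padd :: "real \<times> real \<Rightarrow> real \<times> real \<Rightarrow> real \<times> real" where
  "padd p v = (fst p + fst v, snd p + snd v)"

lemma translate_rib: "translate v (rib p w) = rib (padd p v) w"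
  unfolding translate_def rib_def image_image
  by (rule image_cong) (auto simp: mk_def padd_def tpos_def)

lemma translate_tb: "translate v (tb q k a b) = tb (padd q v) k a b"
  unfolding translate_def tb_def by (auto simp: padd_def tpos_def)

definition newq :: "real \<times> real \<Rightarrow> nat list \<Rightarrow> real \<times> real" where
  "newq p w = (if even (length w - 1) then (fst p + real (length w - 1), snd p)
               else (fst p + real (length w - 1) - 1, snd p))"

definition newk :: "nat list \<Rightarrow> nat" where
  "newk w = (if even (length w - 1) then 1 else 2)"

lemma ty_snoc: "c \<in> cells w \<Longrightarrow> ty (w @ [u]) c = ty w c"
  by (cases c) (auto simp: cells_def m0_def m1_def nth_append split: if_splits)

lemma cells_snoc: "w \<noteq> [] \<Longrightarrow> cells (w @ [u]) = cells w \<union>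
   (if even (length w - 1) then {(length w, 1), (length w + 1, 1)} else {(length w, 0), (length w + 1, 0)})"
  by (auto simp: cells_def m0_def m1_def)

lemma rib_snoc:
  assumes w: "w \<noteq> []"
  shows "rib p (w @ [u]) = rib p w \<union> tb (newq p w) (newk w) (last w) u"
proof -
  have "rib p (w @ [u]) = mk p (w@[u]) ` cells w \<union> mk p (w@[u]) `
     (if even (length w - 1) then {(length w, 1), (length w + 1, 1)} else {(length w, 0), (length w + 1, 0)})"
    unfolding rib_def cells_snoc[OF w] by blast
  also have "mk p (w@[u]) ` cells w = rib p w"
    unfolding rib_def by (rule image_cong) (auto simp: mk_def ty_snoc)
  also have "mk p (w@[u]) `
     (if even (length w - 1) then {(length w, 1), (length w + 1, 1)} else {(length w, 0), (length w + 1, 0)})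
     = tb (newq p w) (newk w) (last w) u"
  proof -
    obtain n where n: "length w = Suc n" using w by (cases w) auto
    have l: "last w = w ! n" using w n by (simp add: last_conv_nth)
    show ?thesis using n
      by (auto simp: mk_def tb_def newq_def newk_def nth_append l)
  qed
  finally show ?thesis .
qed

lemma rib_snoc_disj: "w \<noteq> [] \<Longrightarrow> rib p w \<inter> tb (newq p w) (newk w) (last w) u = {}"
proof -
  assume w: "w \<noteq> []"
  obtain n where n: "length w = Suc n" using w by (cases w) auto
  show ?thesis unfolding rib_def
    using n by (auto simp: mk_def tb_def newq_def newk_def cells_def m0_def m1_def)
qed


lemmas ewsimps = edge_weight_def all_dirs_def glue_point_def mk_def seed0_def seed2_def
  topL_def topR_def botL_def botR_def gam_def bet_def strg_def

lemma e1: "edge_weight strg (mk p w (0,0)) (mk p w (1,0)) = 1"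
  by (simp add: ewsimps)

lemma e2: "edge_weight strg (mk p w (0,0)) (mk p w (0,1)) = 1"
  by (simp add: ewsimps)

lemma e3: "k \<ge> 1 \<Longrightarrow> r = (if odd k then 1 else 0) \<Longrightarrow> edge_weight strg (mk p w (k,r)) (mk p w (k+1,r)) = 1"
  by (simp add: ewsimps)

lemma e4: "k \<ge> 1 \<Longrightarrow> r = (if odd k then 1 else 0) \<Longrightarrow> edge_weight strg (mk p w (k-1,r)) (mk p w (k,r)) = 1/2"
  by (cases k) (auto simp: ewsimps)

lemma e5: "k \<ge> 1 \<Longrightarrow> r = (if odd k then 1 else 0) \<Longrightarrow> edge_weight strg (mk p w (k,1-r)) (mk p w (k,r)) = 1/2"
  by (auto simp: ewsimps)


definition ui :: "nat \<times> nat \<Rightarrow> nat" where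
  "ui c = (if fst c = 0 then 0 else if (odd (fst c) \<longleftrightarrow> snd c = 1) then fst c else fst c - 1)"

lemma rib_cut_half:
  assumes AB: "A \<union> B = rib p w" "A \<inter> B = {}" "B \<noteq> {}" and A0: "mk p w (0,0) \<in> A" and wne: "w \<noteq> []"
  shows "cut_weight strg A B \<ge> 1"
proof -
  have fr: "finite (rib p w)" using rib_asm[of p w] unfolding is_assembly_def by simp
  have fin: "finite A" "finite B" using AB(1) fr finite_subset[of A "rib p w"] finite_subset[of B "rib p w"]
    by auto
  have c00: "(0,0) \<in> cells w" by (simp add: cells_def)
  have c10: "(1,0) \<in> cells w" "(0,1) \<in> cells w" using wne by (cases w, simp, auto simp: cells_def m0_def m1_def elim: oddE)
  have memA: "mk p w c \<in> A" if "c \<in> cells w" "mk p w c \<notin> B" for c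
    using that AB(1) unfolding rib_def by blast
  show ?thesis
  proof (cases "mk p w (1,0) \<in> B \<or> mk p w (0,1) \<in> B")
    case True
    then show ?thesis
    proof
      assume "mk p w (1,0) \<in> B"
      from cut_ge1[of strg, OF strg_nonneg fin A0 this] e1 show ?thesis by simp
    next
      assume "mk p w (0,1) \<in> B"
      from cut_ge1[of strg, OF strg_nonneg fin A0 this] e2 show ?thesis by simp
    qed
  next
    case False
    define CB where "CB = {c \<in> cells w. mk p w c \<in> B}"
    have "CB \<noteq> {}" using AB unfolding CB_def rib_def by auto
    define k where "k = (LEAST k. \<exists>c\<in>CB. ui c = k)"
    have ex: "\<exists>k c. c \<in> CB \<and> ui c = k" using \<open>CB \<noteq> {}\<close> by auto
    have "\<exists>c\<in>CB. ui c = k" unfolding k_def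
      apply (rule LeastI_ex) using ex by blast
    then obtain c where c: "c \<in> CB" "ui c = k" by blast
    have minA: "mk p w c' \<in> A" if "c' \<in> cells w" "ui c' < k" for c'
    proof -
      have "c' \<notin> CB" using that not_less_Least unfolding k_def by blast
      thus ?thesis using that memA CB_def by blast
    qed
    have cB: "mk p w c \<in> B" "c \<in> cells w" using c CB_def by auto
    have k1: "k \<ge> 1"
    proof (rule ccontr)
      assume "\<not> k \<ge> 1"
      hence "ui c = 0" using c by simp
      hence "c = (0,0) \<or> c = (1,0) \<or> c = (0,1)" using cB(2)
        by (cases c) (auto simp: ui_def cells_def split: if_splits)
      thus False using cB A0 AB(2) False by auto
    qed
    define r :: nat where "r = (if odd k then 1 else 0)"
    obtain n where n: "length w = Suc n" using wne
      by (cases w) auto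
    have cL: "c = (k,r) \<or> c = (k+1,r)" using c(2) k1 cB(2)
      by (cases c) (auto simp: ui_def r_def cells_def split: if_splits)
    have par: "k + 1 \<le> j" if "k \<le> j" "odd k \<longleftrightarrow> even j" for j
      using that by (metis Suc_eq_plus1 even_Suc le_neq_implies_less less_eq_Suc_le)
    have inL1: "(k+1,r) \<in> cells w"
      using cL cB(2) n k1 par[of n] par[of "Suc n"] unfolding cells_def m0_def m1_def r_def by (auto split: if_splits)
    have inL0: "(k,r) \<in> cells w"
      using inL1 unfolding cells_def by auto
    note inL = inL0 inL1
    have inN1: "(k-1,r) \<in> cells w" using inL k1 by (auto simp: cells_def)
    have inN2: "(k,1-r) \<in> cells w" using inL1 n unfolding cells_def m0_def m1_def r_def
      by (auto split: if_splits)
    note inN = inN1 inN2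
    have uiN: "ui (k-1,r) < k" "ui (k,1-r) < k"
      using k1 by (auto simp: ui_def r_def)
    have uiL: "ui (k,r) = k" "ui (k+1,r) = k" using k1 by (auto simp: ui_def r_def)
    show ?thesis
    proof (cases "mk p w (k,r) \<in> B")
      case LB: True
      show ?thesis
      proof (cases "mk p w (k+1,r) \<in> B")
        case True
        have "mk p w (k-1,r) \<noteq> mk p w (k,1-r)" using k1 by (auto simp: mk_def r_def)
        from cut_ge2[of strg, OF strg_nonneg fin minA[OF inN(1) uiN(1)] minA[OF inN(2) uiN(2)] this LB]
        show ?thesis using e4[OF k1 r_def, of p w] e5[OF k1 r_def, of p w] by linarith
      next
        case False
        hence "mk p w (k+1,r) \<in> A" using memA inL by blast
        from cut_ge1[of strg, OF strg_nonneg fin this LB] show ?thesis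
          using e3[OF k1 r_def] by (simp add: ew_sym)
      qed
    next
      case False
      hence LA: "mk p w (k,r) \<in> A" using memA inL by blast
      hence "c = (k+1,r)" using cL cB AB(2) by auto
      with cut_ge1[of strg, OF strg_nonneg fin LA cB(1)] show ?thesis
        using e3[OF k1 r_def] by simp
    qed
  qed
qed

lemma rib_stable: "w \<noteq> [] \<Longrightarrow> stable_asm strg (rib p w)"
  unfolding stable_asm_def
proof (intro conjI allI impI)
  assume "w \<noteq> []"
  show "is_assembly (rib p w)" by (rule rib_asm)
  fix A B assume h: "A \<union> B = rib p w \<and> A \<inter> B = {} \<and> A \<noteq> {} \<and> B \<noteq> {}"
  have "mk p w (0,0) \<in> rib p w" by (auto simp: rib_def cells_def)
  then consider "mk p w (0,0) \<in> A" | "mk p w (0,0) \<in> B" using h by blast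
  then show "cut_weight strg A B \<ge> 1"
  proof cases
    case 1 thus ?thesis using rib_cut_half h \<open>w \<noteq> []\<close> by blast
  next
    case 2
    have "cut_weight strg B A \<ge> 1" using rib_cut_half[of B A p w] h 2 \<open>w \<noteq> []\<close> by blast
    thus ?thesis by (simp add: cut_sym)
  qed
qed


definition outcell :: "nat list \<Rightarrow> nat \<times> nat" where
  "outcell w = (length w, if odd (length w - 1) then 1 else 0)"
definition outdir :: "nat list \<Rightarrow> dir" where
  "outdir w = (if even (length w - 1) then North else South)"
definition outglue :: "nat list \<Rightarrow> nat" where
  "outglue w = (if even (length w - 1) then gam (last w) else bet (last w))"

lemma tglue_mk: "tglue (mk p w c) d = fst (ty w c) d"
  by (simp add: tglue_def mk_def)
lemma tpos_mk: "tpos (mk p w c) = (fst p + real (fst c), snd p + real (snd c))"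
  by (simp add: tpos_def mk_def)

lemmas tydefs = seed0_def seed2_def topL_def topR_def botL_def botR_def mkt_def

lemma rib_cov:
  assumes w: "w \<noteq> []" and c: "c \<in> cells w" and g: "tglue (mk p w c) d = Some g"
  shows "(\<exists>c'\<in>cells w. tpos (mk p w c') = nb (tpos (mk p w c)) d) \<or> (d = East \<and> g = 0)
     \<or> (c = outcell w \<and> d = outdir w \<and> g = outglue w)"
proof -
  obtain x y where xy: "c = (x,y)" by (cases c)
  obtain n where n: "length w = Suc n" using w by (cases w) auto
  have last: "last w = w ! n" using w n by (simp add: last_conv_nth)
  have y: "y = 0 \<or> y = 1" using c xy by (auto simp: cells_def)
  have cov: "?thesis" if "c' \<in> cells w" "tpos (mk p w c') = nb (tpos (mk p w c)) d" for c'
    using that by blast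
  show ?thesis
  proof (cases d)
    case North
    show ?thesis
    proof (cases "(x,y+1) \<in> cells w")
      case True
      show ?thesis by (rule cov[OF True]) (simp add: tpos_mk xy North)
    next
      case False
      have "y = 0" using g xy North y by (auto simp: tglue_mk tydefs split: if_splits)
      moreover have "x \<noteq> 0" using False \<open>y = 0\<close> by (auto simp: cells_def)
      ultimately have xn: "x = Suc n \<and> even n" using False c xy n
        by (auto simp: cells_def m0_def m1_def split: if_splits)
      show ?thesis using xn g xy n North \<open>y = 0\<close>
        by (auto simp: tglue_mk tydefs outcell_def outdir_def outglue_def last)
    qed
  next
    case South
    show ?thesis
    proof (cases "y = 1")
      case True
      show ?thesis
      proof (cases "(x,0) \<in> cells w")
        case T2: True
        show ?thesis by (rule cov[OF T2]) (simp add: tpos_mk xy South True)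
      next
        case False
        have xn: "x = Suc n \<and> odd n" using False True c xy n
          by (auto simp: cells_def m0_def m1_def split: if_splits)
        show ?thesis using xn g xy n South True
          by (auto simp: tglue_mk tydefs outcell_def outdir_def outglue_def last)
      qed
    next
      case False
      hence "y = 0" using y by simp
      thus ?thesis using g xy South by (auto simp: tglue_mk tydefs split: if_splits)
    qed
  next
    case East
    show ?thesis
    proof (cases "g = 0")
      case True thus ?thesis using East by simp
    next
      case False
      have cs: "(x = 0 \<and> y = 0) \<or> (y = 0 \<and> even x) \<or> (y = 1 \<and> odd x)"
        using g False East y xy by (auto simp: tglue_mk tydefs split: if_splits)
      have par: "k + 1 \<le> j" if "k \<le> j" "odd k \<longleftrightarrow> even j" for k j :: nat
        using that by (metis Suc_eq_plus1 even_Suc le_neq_implies_less less_eq_Suc_le)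
      have "(x+1, y) \<in> cells w" using cs c xy n par[of x n] par[of x "Suc n"]
        by (auto simp: cells_def m0_def m1_def split: if_splits)
      show ?thesis by (rule cov[OF \<open>(x+1, y) \<in> cells w\<close>]) (simp add: tpos_mk xy East)
    qed
  next
    case West
    have "x \<noteq> 0" using g xy West by (auto simp: tglue_mk tydefs split: if_splits)
    hence "(x-1, y) \<in> cells w" using c xy by (auto simp: cells_def)
    show ?thesis by (rule cov[OF \<open>(x-1, y) \<in> cells w\<close>]) (use \<open>x \<noteq> 0\<close> in \<open>simp add: tpos_mk xy West\<close>)
  qed
qed


lemma nb_opp: "nb (nb P d) (opp d) = P"
  by (cases P; cases d) auto

lemma nb_injP: "nb P d = nb Q d \<Longrightarrow> P = Q"
  by (cases P; cases Q; cases d) auto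

lemma same_pos_contra:
  assumes "is_assembly (A \<union> B)" "A \<inter> B = {}" "a' \<in> A" "b \<in> B" "tpos a' = tpos b"
  shows False
proof -
  have "a' \<noteq> b" using assms(2-4) by blast
  hence "\<not> overlap a' b" using assms(1,3,4) unfolding is_assembly_def by blast
  thus False using assms(5) by (simp add: overlap_def)
qed

lemma asm_nonoverlap:
  assumes "is_assembly (A \<union> B)" "A \<inter> B = {}" "a \<in> A" "b \<in> B"
  shows "\<not> overlap a b"
proof -
  have "a \<noteq> b" using assms(2-4) by blast
  thus ?thesis using assms(1,3,4) unfolding is_assembly_def by blast
qed

lemma gam_bet: "gam x \<noteq> bet y" by (simp add: gam_def bet_def) presburger
lemma bet_gam: "bet x \<noteq> gam y" by (simp add: gam_def bet_def) presburger

lemma rib_rib_cut: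
  assumes w1: "w1 \<noteq> []" and w2: "w2 \<noteq> []"
    and asm: "is_assembly (rib p1 w1 \<union> rib p2 w2)" "rib p1 w1 \<inter> rib p2 w2 = {}"
  shows "cut_weight strg (rib p1 w1) (rib p2 w2) = 0"
  unfolding cut_weight_def
proof (intro sum.neutral ballI)
  fix a b assume a: "a \<in> rib p1 w1" and b: "b \<in> rib p2 w2"
  show "edge_weight strg a b = 0"
  proof (rule ccontr)
    assume nz: "edge_weight strg a b \<noteq> 0"
    obtain c1 where c1: "c1 \<in> cells w1" "a = mk p1 w1 c1" using a unfolding rib_def by blast
    obtain c2 where c2: "c2 \<in> cells w2" "b = mk p2 w2 c2" using b unfolding rib_def by blast
    from M1[OF asm_nonoverlap[OF asm a b] nz] obtain d g where
      m: "tglue a d = Some g" "tglue b (opp d) = Some g" "tpos b = nb (tpos a) d" by blast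
    have A: "(d = East \<and> g = 0) \<or> (c1 = outcell w1 \<and> d = outdir w1 \<and> g = outglue w1)"
    proof -
      have "\<not> (\<exists>c'\<in>cells w1. tpos (mk p1 w1 c') = nb (tpos (mk p1 w1 c1)) d)"
      proof
        assume "\<exists>c'\<in>cells w1. tpos (mk p1 w1 c') = nb (tpos (mk p1 w1 c1)) d"
        then obtain c' where "c' \<in> cells w1" "tpos (mk p1 w1 c') = tpos b" using m c1 by auto
        thus False using same_pos_contra[OF asm _ b] unfolding rib_def by blast
      qed
      thus ?thesis using rib_cov[OF w1 c1(1), of p1 d g] m c1 by blast
    qed
    have B: "(opp d = East \<and> g = 0) \<or> (c2 = outcell w2 \<and> opp d = outdir w2 \<and> g = outglue w2)"
    proof -
      have "\<not> (\<exists>c'\<in>cells w2. tpos (mk p2 w2 c') = nb (tpos (mk p2 w2 c2)) (opp d))"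
      proof
        assume "\<exists>c'\<in>cells w2. tpos (mk p2 w2 c') = nb (tpos (mk p2 w2 c2)) (opp d)"
        then obtain c' where "c' \<in> cells w2" "tpos (mk p2 w2 c') = tpos a" using m c2 nb_opp by auto
        hence "mk p2 w2 c' \<in> rib p2 w2" "tpos a = tpos (mk p2 w2 c')" unfolding rib_def by auto
        thus False using same_pos_contra[OF asm a] by blast
      qed
      thus ?thesis using rib_cov[OF w2 c2(1), of p2 "opp d" g] m c2 by blast
    qed
    show False using A B gam_bet bet_gam
      by (cases d) (auto simp: outdir_def outglue_def split: if_splits)
  qed
qed


definition tbL :: "real \<times> real \<Rightarrow> nat \<Rightarrow> nat \<Rightarrow> nat ptile" where
  "tbL q k a = (if k = 1 then ((fst q + 1, snd q + 1), topL a) else ((fst q + 2, snd q), botL a))"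
definition tbR :: "real \<times> real \<Rightarrow> nat \<Rightarrow> nat \<Rightarrow> nat ptile" where
  "tbR q k b = (if k = 1 then ((fst q + 2, snd q + 1), topR b) else ((fst q + 3, snd q), botR b))"

lemma tb_LR: "tb q k a b = {tbL q k a, tbR q k b}"
  by (simp add: tb_def tbL_def tbR_def)

lemma tbL_neq: "tbL q k a \<noteq> tbR q k b"
  by (simp add: tbL_def tbR_def)

lemma rib_site:
  assumes w: "w \<noteq> []" and asm: "is_assembly (rib p w \<union> X)" "rib p w \<inter> X = {}"
    and r: "r \<in> rib p w" and x: "x \<in> X" and nz: "edge_weight strg r x \<noteq> 0"
  shows "\<exists>d g. tglue r d = Some g \<and> tglue x (opp d) = Some g \<and> tpos x = nb (tpos r) d
     \<and> edge_weight strg r x = strg g \<and>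
     ((d = East \<and> g = 0) \<or> (r = mk p w (outcell w) \<and> d = outdir w \<and> g = outglue w))"
proof -
  obtain c where c: "c \<in> cells w" "r = mk p w c" using r unfolding rib_def by blast
  from M1[OF asm_nonoverlap[OF asm r x] nz] obtain d g where
    m: "tglue r d = Some g" "tglue x (opp d) = Some g" "tpos x = nb (tpos r) d"
       "edge_weight strg r x = strg g" by blast
  have "\<not> (\<exists>c'\<in>cells w. tpos (mk p w c') = nb (tpos (mk p w c)) d)"
  proof
    assume "\<exists>c'\<in>cells w. tpos (mk p w c') = nb (tpos (mk p w c)) d"
    then obtain c' where "c' \<in> cells w" "tpos (mk p w c') = tpos x" using m c by auto
    thus False using same_pos_contra[OF asm _ x] unfolding rib_def by blast
  qed
  hence "(d = East \<and> g = 0) \<or> (c = outcell w \<and> d = outdir w \<and> g = outglue w)"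
    using rib_cov[OF w c(1), of p d g] m c by blast
  thus ?thesis using m c by blast
qed

lemma sum_le_half:
  assumes fin: "finite R" and h: "\<And>r. r \<in> R \<Longrightarrow> f r \<noteq> 0 \<Longrightarrow> f r = 1/2 \<and> P r"
    and uniq: "\<And>r1 r2. r1 \<in> R \<Longrightarrow> r2 \<in> R \<Longrightarrow> P r1 \<Longrightarrow> P r2 \<Longrightarrow> r1 = r2"
  shows "(\<Sum>r\<in>R. f r) \<le> (1/2 :: rat)"
proof (cases "\<exists>r\<in>R. f r \<noteq> 0")
  case False thus ?thesis by simp
next
  case True
  then obtain r0 where r0: "r0 \<in> R" "f r0 \<noteq> 0" by blast
  have "(\<Sum>r\<in>R. f r) = (\<Sum>r\<in>{r0}. f r)"
  proof (rule sum.mono_neutral_right[OF fin])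
    show "{r0} \<subseteq> R" using r0 by simp
    show "\<forall>i\<in>R - {r0}. f i = 0" using h uniq r0 by blast
  qed
  thus ?thesis using h r0 by simp
qed

lemma rib_brick:
  assumes w: "w \<noteq> []" and asm: "is_assembly (rib p w \<union> tb q k a b0)" "rib p w \<inter> tb q k a b0 = {}"
    and cut: "cut_weight strg (rib p w) (tb q k a b0) \<ge> 1"
  shows "a = last w \<and> tb q k a b0 = tb (newq p w) (newk w) (last w) b0"
proof (rule ccontr)
  assume nc: "\<not> (a = last w \<and> tb q k a b0 = tb (newq p w) (newk w) (last w) b0)"
  let ?R = "rib p w"
  let ?L = "tbL q k a" and ?Rt = "tbR q k b0"
  obtain n where n: "length w = Suc n" using w by (cases w) auto
  have fin: "finite ?R" using rib_asm[of p w] unfolding is_assembly_def by simp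
  have xR: "edge_weight strg r ?Rt = 0" if r: "r \<in> ?R" for r
  proof (rule ccontr)
    assume "edge_weight strg r ?Rt \<noteq> 0"
    from rib_site[OF w asm r _ this] obtain d g where
      s: "tglue ?Rt (opp d) = Some g" "(d = East \<and> g = 0) \<or> (d = outdir w \<and> g = outglue w)"
      by (auto simp: tb_LR)
    thus False using gam_bet bet_gam
      by (auto simp: tbR_def outdir_def outglue_def tydefs tglue_def split: if_splits)
  qed
  have xL: "edge_weight strg r ?L = 1/2 \<and> tpos ?L = nb (tpos r) East"
    if r: "r \<in> ?R" and nz: "edge_weight strg r ?L \<noteq> 0" for r
  proof -
    from rib_site[OF w asm r _ nz] obtain d g where
      s: "tglue ?L (opp d) = Some g" "tpos ?L = nb (tpos r) d" "edge_weight strg r ?L = strg g"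
         "(d = East \<and> g = 0) \<or> (r = mk p w (outcell w) \<and> d = outdir w \<and> g = outglue w)"
      by (auto simp: tb_LR)
    have "\<not> (r = mk p w (outcell w) \<and> d = outdir w \<and> g = outglue w)"
    proof
      assume o: "r = mk p w (outcell w) \<and> d = outdir w \<and> g = outglue w"
      have "a = last w \<and> tb q k a b0 = tb (newq p w) (newk w) (last w) b0"
      proof (cases "even n")
        case True
        have k: "k = 1" and aa: "a = last w" using o s(1) True n gam_bet
          by (auto simp: tbL_def outdir_def outglue_def tydefs tglue_def gam_def split: if_splits)
        have "tpos ?L = (fst p + real n + 1, snd p + 1)" using o s(2) True n
          by (simp add: outdir_def outcell_def tpos_mk)
        hence q: "q = newq p w" using k True n by (auto simp: tbL_def tpos_def newq_def prod_eq_iff)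
        show ?thesis using k aa q True n by (simp add: newk_def)
      next
        case False
        have k: "k \<noteq> 1" and aa: "a = last w" using o s(1) False n bet_gam
          by (auto simp: tbL_def outdir_def outglue_def tydefs tglue_def bet_def split: if_splits)
        have "tpos ?L = (fst p + real n + 1, snd p)" using o s(2) False n
          by (simp add: outdir_def outcell_def tpos_mk)
        hence q: "q = newq p w" using k False n by (auto simp: tbL_def tpos_def newq_def prod_eq_iff)
        show ?thesis using k aa q False n by (simp add: newk_def tb_def)
      qed
      thus False using nc by blast
    qed
    thus ?thesis using s by (auto simp: strg_def)
  qed
  have "cut_weight strg ?R (tb q k a b0) = (\<Sum>r\<in>?R. edge_weight strg r ?L + edge_weight strg r ?Rt)"
    unfolding cut_weight_def tb_LR using tbL_neq by (simp add: )
  also have "\<dots> = (\<Sum>r\<in>?R. edge_weight strg r ?L)" using xR by simp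
  also have "\<dots> \<le> 1/2"
  proof (rule sum_le_half[OF fin, where P = "\<lambda>r. tpos ?L = nb (tpos r) East"])
    show "\<And>r. r \<in> ?R \<Longrightarrow> edge_weight strg r ?L \<noteq> 0 \<Longrightarrow> edge_weight strg r ?L = 1/2 \<and> tpos ?L = nb (tpos r) East"
      using xL by blast
    fix r1 r2 assume "r1 \<in> ?R" "r2 \<in> ?R" "tpos ?L = nb (tpos r1) East" "tpos ?L = nb (tpos r2) East"
    hence "tpos r1 = tpos r2" "r1 \<in> ?R" "r2 \<in> ?R" using nb_injP by metis+
    thus "r1 = r2" using rib_asm[of p w] unfolding is_assembly_def overlap_def by fastforce
  qed
  finally show False using cut by simp
qed


lemma gb_simps[simp]: "gam x = gam y \<longleftrightarrow> x = y" "bet x = bet y \<longleftrightarrow> x = y"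
  "gam x \<noteq> bet y" "bet x \<noteq> gam y"
  "gam x \<noteq> 0" "gam x \<noteq> 1" "gam x \<noteq> 2" "bet x \<noteq> 0" "bet x \<noteq> 1" "bet x \<noteq> 2"
  "0 \<noteq> gam x" "1 \<noteq> gam x" "2 \<noteq> gam x" "0 \<noteq> bet x" "1 \<noteq> bet x" "2 \<noteq> bet x"
  "gam x \<noteq> Suc 0" "bet x \<noteq> Suc 0" "Suc 0 \<noteq> gam x" "Suc 0 \<noteq> bet x"
  using gam_bet bet_gam by (auto simp: gam_def bet_def)

lemma tbLR_pos: "tpos (tbR q k b) = nb (tpos (tbL q k a)) East"
  by (simp add: tbL_def tbR_def tpos_def)

lemma bbLL: assumes "\<not> overlap (tbL q1 k1 a1) (tbL q2 k2 a2)"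
  shows "edge_weight strg (tbL q1 k1 a1) (tbL q2 k2 a2) = 0"
proof (rule ccontr)
  assume "edge_weight strg (tbL q1 k1 a1) (tbL q2 k2 a2) \<noteq> 0"
  from M1[OF assms this] obtain d g where "tglue (tbL q1 k1 a1) d = Some g" "tglue (tbL q2 k2 a2) (opp d) = Some g"
    by blast
  thus False by (cases d; cases "k1 = 1"; cases "k2 = 1") (auto simp: tbL_def tydefs tglue_def)
qed

lemma bbRR: assumes "\<not> overlap (tbR q1 k1 a1) (tbR q2 k2 a2)"
  shows "edge_weight strg (tbR q1 k1 a1) (tbR q2 k2 a2) = 0"
proof (rule ccontr)
  assume "edge_weight strg (tbR q1 k1 a1) (tbR q2 k2 a2) \<noteq> 0"
  from M1[OF assms this] obtain d g where "tglue (tbR q1 k1 a1) d = Some g" "tglue (tbR q2 k2 a2) (opp d) = Some g"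
    by blast
  thus False by (cases d; cases "k1 = 1"; cases "k2 = 1") (auto simp: tbR_def tydefs tglue_def)
qed

lemma bbLR: assumes "\<not> overlap (tbL q1 k1 a1) (tbR q2 k2 b2)" "\<not> overlap (tbR q1 k1 b1) (tbR q2 k2 b2)"
    and nz: "edge_weight strg (tbL q1 k1 a1) (tbR q2 k2 b2) \<noteq> 0"
  shows "edge_weight strg (tbL q1 k1 a1) (tbR q2 k2 b2) = 1/2" "
     (tpos (tbR q2 k2 b2) = nb (tpos (tbL q1 k1 a1)) West \<or> tpos (tbR q2 k2 b2) = nb (tpos (tbL q1 k1 a1)) North
      \<or> tpos (tbR q2 k2 b2) = nb (tpos (tbL q1 k1 a1)) South)"
proof -
  from M1[OF assms(1) nz] obtain d g where m: "tglue (tbL q1 k1 a1) d = Some g" "tglue (tbR q2 k2 b2) (opp d) = Some g"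
    "tpos (tbR q2 k2 b2) = nb (tpos (tbL q1 k1 a1)) d" "edge_weight strg (tbL q1 k1 a1) (tbR q2 k2 b2) = strg g"
    by blast
  have "d \<noteq> East"
  proof
    assume "d = East"
    hence "tpos (tbR q2 k2 b2) = tpos (tbR q1 k1 b1)" using m(3) tbLR_pos[of q1 k1 b1 a1] by simp
    thus False using assms(2) by (simp add: overlap_def)
  qed
  thus "edge_weight strg (tbL q1 k1 a1) (tbR q2 k2 b2) = 1/2" using m by (cases d; cases "k1 = 1"; cases "k2 = 1") (auto simp: tbL_def tbR_def tydefs tglue_def strg_def)
  show "tpos (tbR q2 k2 b2) = nb (tpos (tbL q1 k1 a1)) West \<or> tpos (tbR q2 k2 b2) = nb (tpos (tbL q1 k1 a1)) North
      \<or> tpos (tbR q2 k2 b2) = nb (tpos (tbL q1 k1 a1)) South" using m \<open>d \<noteq> East\<close> by (cases d) auto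
qed

lemma bbRL: assumes "\<not> overlap (tbR q1 k1 b1) (tbL q2 k2 a2)" "\<not> overlap (tbL q1 k1 a1) (tbL q2 k2 a2)"
    and nz: "edge_weight strg (tbR q1 k1 b1) (tbL q2 k2 a2) \<noteq> 0"
  shows "edge_weight strg (tbR q1 k1 b1) (tbL q2 k2 a2) = 1/2" "
     (tpos (tbL q2 k2 a2) = nb (tpos (tbR q1 k1 b1)) East \<or> tpos (tbL q2 k2 a2) = nb (tpos (tbR q1 k1 b1)) North
      \<or> tpos (tbL q2 k2 a2) = nb (tpos (tbR q1 k1 b1)) South)"
proof -
  from M1[OF assms(1) nz] obtain d g where m: "tglue (tbR q1 k1 b1) d = Some g" "tglue (tbL q2 k2 a2) (opp d) = Some g"
    "tpos (tbL q2 k2 a2) = nb (tpos (tbR q1 k1 b1)) d" "edge_weight strg (tbR q1 k1 b1) (tbL q2 k2 a2) = strg g"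
    by blast
  have "d \<noteq> West"
  proof
    assume "d = West"
    hence "tpos (tbL q2 k2 a2) = tpos (tbL q1 k1 a1)" using m(3) tbLR_pos[of q1 k1 b1 a1] nb_opp[of _ East] by simp
    thus False using assms(2) by (simp add: overlap_def)
  qed
  thus "edge_weight strg (tbR q1 k1 b1) (tbL q2 k2 a2) = 1/2" using m by (cases d; cases "k1 = 1"; cases "k2 = 1") (auto simp: tbL_def tbR_def tydefs tglue_def strg_def)
  show "tpos (tbL q2 k2 a2) = nb (tpos (tbR q1 k1 b1)) East \<or> tpos (tbL q2 k2 a2) = nb (tpos (tbR q1 k1 b1)) North
      \<or> tpos (tbL q2 k2 a2) = nb (tpos (tbR q1 k1 b1)) South" using m \<open>d \<noteq> West\<close> by (cases d) auto
qed

lemma brick_brick: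
  assumes asm: "is_assembly (tb q1 k1 a1 b1 \<union> tb q2 k2 a2 b2)" "tb q1 k1 a1 b1 \<inter> tb q2 k2 a2 b2 = {}"
  shows "cut_weight strg (tb q1 k1 a1 b1) (tb q2 k2 a2 b2) < 1"
proof -
  let ?L1 = "tbL q1 k1 a1" and ?R1 = "tbR q1 k1 b1" and ?L2 = "tbL q2 k2 a2" and ?R2 = "tbR q2 k2 b2"
  have no: "\<not> overlap ?L1 ?L2" "\<not> overlap ?L1 ?R2" "\<not> overlap ?R1 ?L2" "\<not> overlap ?R1 ?R2"
    using asm_nonoverlap[OF asm] by (auto simp: tb_LR)
  have "cut_weight strg (tb q1 k1 a1 b1) (tb q2 k2 a2 b2) =
    edge_weight strg ?L1 ?L2 + edge_weight strg ?L1 ?R2 + (edge_weight strg ?R1 ?L2 + edge_weight strg ?R1 ?R2)"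
    unfolding cut_weight_def tb_LR using tbL_neq by simp
  also have "\<dots> = edge_weight strg ?L1 ?R2 + edge_weight strg ?R1 ?L2"
    using bbLL[OF no(1)] bbRR[OF no(4)] by simp
  also have "\<dots> < 1"
  proof -
    have p1: "tpos ?R1 = nb (tpos ?L1) East" "tpos ?R2 = nb (tpos ?L2) East" by (rule tbLR_pos)+
    have e0: "edge_weight strg ?L1 ?R2 \<ge> 0" "edge_weight strg ?R1 ?L2 \<ge> 0"
      by (rule ew_nonneg, rule strg_nonneg)+
    show ?thesis
    proof (cases "edge_weight strg ?L1 ?R2 = 0 \<or> edge_weight strg ?R1 ?L2 = 0")
      case True
      have "edge_weight strg ?L1 ?R2 \<le> 1/2"
        using bbLR(1)[OF no(2) no(4)] by (cases "edge_weight strg ?L1 ?R2 = 0") auto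
      moreover have "edge_weight strg ?R1 ?L2 \<le> 1/2"
        using bbRL(1)[OF no(3) no(1)] by (cases "edge_weight strg ?R1 ?L2 = 0") auto
      ultimately show ?thesis using True by auto
    next
      case False
      hence a: "tpos ?R2 = nb (tpos ?L1) West \<or> tpos ?R2 = nb (tpos ?L1) North \<or> tpos ?R2 = nb (tpos ?L1) South"
        and b: "tpos ?L2 = nb (tpos ?R1) East \<or> tpos ?L2 = nb (tpos ?R1) North \<or> tpos ?L2 = nb (tpos ?R1) South"
        using bbLR(2)[OF no(2) no(4)] bbRL(2)[OF no(3) no(1)] by auto
      obtain x y where xy: "tpos ?L1 = (x,y)" by (cases "tpos ?L1")
      have False using a b p1 xy by (cases "tpos ?L2") auto
      thus ?thesis ..
    qed
  qed
  finally show ?thesis .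
qed


lemma brick_asm: "is_assembly (tb q k a b)"
  by (auto simp: is_assembly_def tb_LR tbL_def tbR_def overlap_def tpos_def)

lemma ew_brick: "edge_weight strg (tbL q k a) (tbR q k b) = 1"
  by (cases "k = 1") (simp_all add: edge_weight_def all_dirs_def glue_point_def tbL_def tbR_def tydefs tglue_def tpos_def strg_def)

lemma two_part:
  assumes "A \<union> B = {x,y}" "A \<inter> B = {}" "A \<noteq> {}" "B \<noteq> {}" "x \<noteq> y"
  shows "(A = {x} \<and> B = {y}) \<or> (A = {y} \<and> B = {x})"
proof (cases "x \<in> A")
  case True
  hence "x \<notin> B" using assms(2) by auto
  hence "B \<subseteq> {y}" using assms(1) by auto
  hence B: "B = {y}" using assms(4) by auto
  hence "y \<notin> A" using assms(2) by auto
  hence "A = {x}" using assms(1) True by auto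
  thus ?thesis using B by simp
next
  case False
  hence "A \<subseteq> {y}" using assms(1) by auto
  hence A: "A = {y}" using assms(3) by auto
  hence "y \<notin> B" using assms(2) by auto
  hence "B = {x}" using assms(1) False by auto
  thus ?thesis using A by simp
qed

lemma brick_stable: "stable_asm strg (tb q k a b)"
  unfolding stable_asm_def
proof (intro conjI allI impI)
  show "is_assembly (tb q k a b)" by (rule brick_asm)
  fix A B assume h: "A \<union> B = tb q k a b \<and> A \<inter> B = {} \<and> A \<noteq> {} \<and> B \<noteq> {}"
  let ?L = "tbL q k a" and ?R = "tbR q k b"
  have d: "?L \<noteq> ?R" by (rule tbL_neq)
  from h have "(A = {?L} \<and> B = {?R}) \<or> (A = {?R} \<and> B = {?L})"
    unfolding tb_LR using d two_part[of A B ?L ?R] h by simp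
  thus "cut_weight strg A B \<ge> 1"
    using ew_brick[of q k a b] ew_sym[of strg ?L ?R] by (elim disjE) (simp_all add: cut_weight_def)
qed

lemma stable_not_breakable: "stable_asm str C \<Longrightarrow> \<not> breakable str C A B"
  unfolding stable_asm_def breakable_def by force

lemma rib_label: "tlabel (mk p w c) = Some ''l'' \<Longrightarrow> c = (0,0)"
  by (cases c) (auto simp: tlabel_def mk_def tydefs split: if_splits)

lemma rib_has_label: "mk p w (0,0) \<in> rib p w" "tlabel (mk p w (0,0)) = Some ''l''"
  unfolding rib_def by (rule imageI) (auto simp: cells_def tlabel_def mk_def tydefs)

lemma brick_nolabel: "t \<in> tb q k a b \<Longrightarrow> tlabel t = None"
  by (cases "k = 1") (auto simp: tb_def tlabel_def tydefs)

lemma rib_inj: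
  assumes w: "w \<noteq> []" and w': "w' \<noteq> []" and eq: "rib p w = rib q w'"
  shows "last w = last w'"
proof -
  have "mk p w (0,0) \<in> rib q w'" using eq rib_has_label(1)[of p w] by simp
  then obtain c where c: "c \<in> cells w'" "mk p w (0,0) = mk q w' c" unfolding rib_def by blast
  hence "tlabel (mk q w' c) = Some ''l''" using rib_has_label(2)[of p w] by simp
  hence "c = (0,0)" by (rule rib_label)
  hence pq: "p = q" using c(2) by (simp add: mk_def prod_eq_iff)
  have len: "length w = length w'"
    using card_rib[OF w, of p] card_rib[OF w', of q] eq by simp
  obtain n where n: "length w = Suc n" using w by (cases w) auto
  have oc: "outcell w \<in> cells w" using n by (auto simp: outcell_def cells_def m0_def m1_def)
  have "mk p w (outcell w) \<in> rib q w'" using eq oc unfolding rib_def by blast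
  then obtain c' where c': "c' \<in> cells w'" "mk p w (outcell w) = mk q w' c'" unfolding rib_def by blast
  hence "c' = outcell w" using pq by (cases c') (auto simp: mk_def outcell_def)
  hence "ty w (outcell w) = ty w' (outcell w)" using c' by (simp add: mk_def)
  hence "fst (ty w (outcell w)) North = fst (ty w' (outcell w)) North"
    "fst (ty w (outcell w)) South = fst (ty w' (outcell w)) South" by simp_all
  hence "w ! n = w' ! n" using n len
    by (auto simp: outcell_def tydefs split: if_splits)
  thus ?thesis using n len w w' by (simp add: last_conv_nth)
qed


lemma walk_single: "is_walk E s [s]" by (simp add: is_walk_def)

lemma walk_ne: "is_walk E s w \<Longrightarrow> w \<noteq> []" by (simp add: is_walk_def)

lemma walk_snoc: "is_walk E s w \<Longrightarrow> (last w, c) \<in> E \<Longrightarrow> is_walk E s (w @ [c])"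
  unfolding is_walk_def
proof (intro conjI allI impI)
  assume h: "w \<noteq> [] \<and> hd w = s \<and> (\<forall>i. Suc i < length w \<longrightarrow> (w ! i, w ! Suc i) \<in> E)" "(last w, c) \<in> E"
  show "w @ [c] \<noteq> []" by simp
  show "hd (w @ [c]) = s" using h by simp
  fix i assume i: "Suc i < length (w @ [c])"
  show "((w @ [c]) ! i, (w @ [c]) ! Suc i) \<in> E"
  proof (cases "Suc i < length w")
    case True thus ?thesis using h by (simp add: nth_append)
  next
    case False
    hence "i = length w - 1" "Suc i = length w" using i by simp_all
    thus ?thesis using h by (simp add: nth_append last_conv_nth)
  qed
qed

lemma walk_last_V: "E \<subseteq> V \<times> V \<Longrightarrow> s \<in> V \<Longrightarrow> is_walk E s w \<Longrightarrow> last w \<in> V"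
proof -
  assume EV: "E \<subseteq> V \<times> V" and sV: "s \<in> V" and w: "is_walk E s w"
  show ?thesis
  proof (cases "length w = 1")
    case True thus ?thesis using w sV by (cases w) (auto simp: is_walk_def)
  next
    case False
    then obtain n where n: "length w = Suc (Suc n)" using w by (cases w; cases "tl w") (auto simp: is_walk_def)
    hence "(w ! n, w ! Suc n) \<in> E" using w by (auto simp: is_walk_def)
    thus ?thesis using EV n w by (auto simp: last_conv_nth walk_ne)
  qed
qed

lemma walk_take: "is_walk E s W \<Longrightarrow> is_walk E s (take (Suc i) W)"
  unfolding is_walk_def by (auto simp: nth_take hd_take)

lemma padd0: "padd (0,0) v = v" by (simp add: padd_def)

locale sys =
  fixes V :: "nat set" and E :: "(nat \<times> nat) set" and s :: nat
  assumes finV: "finite V" and EV: "E \<subseteq> V \<times> V" and sV: "s \<in> V"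
begin

definition "bricks = (\<lambda>(a,b). tb (0,0) 1 a b) ` E \<union> (\<lambda>(a,b). tb (0,0) 2 a b) ` E"
definition "TT = insert (rib (0,0) [s]) bricks"
definition "PP = {rib p w | p w. is_walk E s w} \<union> bricks"

lemma bricksE: "X \<in> bricks \<Longrightarrow> \<exists>k a c. (a,c) \<in> E \<and> X = tb (0,0) k a c"
  unfolding bricks_def by auto

lemma rib_PP: "is_walk E s w \<Longrightarrow> rib p w \<in> PP"
  unfolding PP_def by blast

lemma bricks_PP: "X \<in> bricks \<Longrightarrow> X \<in> PP"
  unfolding PP_def by blast

lemma PP_cases:
  assumes "X \<in> PP"
  obtains (r) p w where "is_walk E s w" "X = rib p w" | (b) k a c where "(a,c) \<in> E" "X = tb (0,0) k a c"
proof -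
  from assms have "(\<exists>p w. is_walk E s w \<and> X = rib p w) \<or> X \<in> bricks" unfolding PP_def by blast
  thus ?thesis using that bricksE by metis
qed

lemma PP_stable: assumes "X \<in> PP" shows "stable_asm strg X"
  using assms
proof (cases rule: PP_cases)
  case (r p w) thus ?thesis using rib_stable[OF walk_ne[OF r(1)]] by simp
next
  case (b k a c) thus ?thesis using brick_stable by simp
qed

lemma step_rib:
  assumes w: "is_walk E s w" and B: "B \<in> PP" and comb: "combinable strg (rib p w) B C"
  shows "\<exists>c. (last w, c) \<in> E \<and> C = rib p (w @ [c])"
proof -
  from comb obtain v where v: "rib p w \<inter> translate v B = {}" "C = rib p w \<union> translate v B"
    "is_assembly C" "cut_weight strg (rib p w) (translate v B) \<ge> 1"
    unfolding combinable_def Let_def by blast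
  have wne: "w \<noteq> []" using walk_ne[OF w] .
  from B show ?thesis
  proof (cases rule: PP_cases)
    case (r p' w')
    have tB: "translate v B = rib (padd p' v) w'" using r(2) translate_rib by simp
    have asm: "is_assembly (rib p w \<union> rib (padd p' v) w')" using v(2,3) tB by simp
    have dj: "rib p w \<inter> rib (padd p' v) w' = {}" using v(1) tB by simp
    have "cut_weight strg (rib p w) (rib (padd p' v) w') = 0"
      by (rule rib_rib_cut[OF wne walk_ne[OF r(1)] asm dj])
    thus ?thesis using v(4) tB by simp
  next
    case (b k a c)
    have tB: "translate v B = tb v k a c" using b by (simp add: translate_tb padd0)
    have asm: "is_assembly (rib p w \<union> tb v k a c)" using v(2,3) tB by simp
    have dj: "rib p w \<inter> tb v k a c = {}" using v(1) tB by simp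
    have ct: "cut_weight strg (rib p w) (tb v k a c) \<ge> 1" using v(4) tB by simp
    have h: "a = last w \<and> tb v k a c = tb (newq p w) (newk w) (last w) c"
      by (rule rib_brick[OF wne asm dj ct])
    have C1: "C = rib p w \<union> tb v k a c" using v(2) tB by simp
    have "C = rib p (w @ [c])" using C1 conjunct2[OF h] rib_snoc[OF wne, of p c] by simp
    thus ?thesis using b(1) h by auto
  qed
qed

lemma step_brick:
  assumes A: "A \<in> bricks" and B: "B \<in> PP" and comb: "combinable strg A B C"
  shows "C \<in> PP"
proof -
  from comb obtain v where v: "A \<inter> translate v B = {}" "C = A \<union> translate v B"
    "is_assembly C" "cut_weight strg A (translate v B) \<ge> 1"
    unfolding combinable_def Let_def by blast
  from A obtain k a c where ac: "(a,c) \<in> E" "A = tb (0,0) k a c" using bricksE by blast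
  from B show ?thesis
  proof (cases rule: PP_cases)
    case (r p' w')
    let ?q = "padd p' v"
    have tB: "translate v B = rib ?q w'" using r by (simp add: translate_rib)
    have wne: "w' \<noteq> []" using walk_ne[OF r(1)] .
    have C1: "C = rib ?q w' \<union> tb (0,0) k a c" using v(2) tB ac(2) by auto
    have a1: "is_assembly (rib ?q w' \<union> tb (0,0) k a c)" using v(3) C1 by simp
    have a2: "rib ?q w' \<inter> tb (0,0) k a c = {}" using v(1) tB ac(2) by auto
    have a3: "cut_weight strg (rib ?q w') (tb (0,0) k a c) \<ge> 1"
      using v(4) tB ac(2) cut_sym[of strg "tb (0,0) k a c" "rib ?q w'"] by simp
    have h: "a = last w' \<and> tb (0,0) k a c = tb (newq ?q w') (newk w') (last w') c"
      by (rule rib_brick[OF wne a1 a2 a3])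
    have "C = rib ?q (w' @ [c])" using C1 conjunct2[OF h] rib_snoc[OF wne, of ?q c] by simp
    moreover have "is_walk E s (w' @ [c])" using walk_snoc[OF r(1)] ac(1) conjunct1[OF h] by simp
    ultimately show ?thesis using rib_PP by simp
  next
    case (b k' a' c')
    have tB: "translate v B = tb v k' a' c'" using b(2) by (simp add: translate_tb padd0)
    have a1: "is_assembly (tb (0,0) k a c \<union> tb v k' a' c')" using v(2,3) tB ac(2) by simp
    have a2: "tb (0,0) k a c \<inter> tb v k' a' c' = {}" using v(1) tB ac(2) by simp
    have "cut_weight strg (tb (0,0) k a c) (tb v k' a' c') < 1" by (rule brick_brick[OF a1 a2])
    thus ?thesis using v(4) tB ac(2) by simp
  qed
qed

lemma comb_PP: "A \<in> PP \<Longrightarrow> B \<in> PP \<Longrightarrow> combinable strg A B C \<Longrightarrow> C \<in> PP"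
proof -
  assume A: "A \<in> PP" and B: "B \<in> PP" and c: "combinable strg A B C"
  from A show "C \<in> PP"
  proof (cases rule: PP_cases)
    case (r p w)
    from step_rib[OF r(1) B] c r obtain x where "(last w, x) \<in> E" "C = rib p (w @ [x])" by blast
    thus ?thesis using walk_snoc[OF r(1)] rib_PP by simp
  next
    case (b k a c')
    have "tb (0,0) k a c' = tb (0,0) (if k = 1 then 1 else 2) a c'" by (simp add: tb_def)
    hence "A \<in> bricks" using b unfolding bricks_def by (cases "k = 1") auto
    thus ?thesis using step_brick[OF _ B c] by simp
  qed
qed

lemma prod_PP: "X \<in> producible strg TT \<Longrightarrow> X \<in> PP"
proof (induction rule: producible.induct)
  case (init a)
  have "rib (0,0) [s] \<in> PP" using rib_PP walk_single[of E s] by simp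
  thus ?case using init bricks_PP unfolding TT_def by auto
next
  case (comb A B C) show ?case by (rule comb_PP[OF comb.IH(1) comb.IH(2) comb.hyps(3)])
next
  case (brk1 C A B) thus ?case using stable_not_breakable[OF PP_stable[OF brk1.IH]] brk1.hyps(2) by simp
next
  case (brk2 C A B) thus ?case using stable_not_breakable[OF PP_stable[OF brk2.IH]] brk2.hyps(2) by simp
qed

end


lemma fprime_eq: "length S = length W \<Longrightarrow> (\<And>i. i < length S \<Longrightarrow> f (S!i) = Some (W!i)) \<Longrightarrow> fprime f S = W"
proof (induction S arbitrary: W)
  case Nil thus ?case by (simp add: fprime_def)
next
  case (Cons x xs)
  then obtain y ys where W: "W = y # ys" by (cases W) auto
  have "f x = Some y" using Cons.prems(2)[of 0] W by simp
  moreover have "fprime f xs = ys"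
    using Cons.IH[of ys] Cons.prems W by force
  ultimately show ?case using W by (simp add: fprime_def)
qed

lemma fprime_len: "(\<And>x. x \<in> set S \<Longrightarrow> f x \<noteq> None) \<Longrightarrow> length (fprime f S) = length S"
  by (induction S) (auto simp: fprime_def split: option.splits)

lemma last_take: "i < length W \<Longrightarrow> last (take (Suc i) W) = W ! i"
  by (simp add: take_Suc_conv_app_nth)

context sys begin

definition "ff X = (if X \<in> producible strg TT \<and> (\<exists>p w. is_walk E s w \<and> X = rib p w)
   then Some (last (SOME w. \<exists>p. is_walk E s w \<and> X = rib p w)) else None)"

lemma ff_rib: assumes "rib p w \<in> producible strg TT" "is_walk E s w"
  shows "ff (rib p w) = Some (last w)"
proof -
  have ex: "\<exists>w'. \<exists>p'. is_walk E s w' \<and> rib p w = rib p' w'" using assms(2) by blast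
  define w0 where "w0 = (SOME w'. \<exists>p'. is_walk E s w' \<and> rib p w = rib p' w')"
  have "\<exists>p'. is_walk E s w0 \<and> rib p w = rib p' w0" unfolding w0_def by (rule someI_ex[OF ex])
  then obtain p' where "is_walk E s w0" "rib p w = rib p' w0" by blast
  hence l: "last w = last w0" using rib_inj walk_ne[OF assms(2)] walk_ne[of E s w0] by metis
  have cond: "rib p w \<in> producible strg TT \<and> (\<exists>p' w'. is_walk E s w' \<and> rib p w = rib p' w')"
    using assms by blast
  have "ff (rib p w) = Some (last w0)" by (simp only: ff_def w0_def if_P[OF cond])
  thus ?thesis using l by simp
qed

lemma ff_Some: "ff X = Some v \<Longrightarrow> X \<in> producible strg TT \<and> v \<in> V"
proof -
  assume h: "ff X = Some v"
  hence c: "X \<in> producible strg TT \<and> (\<exists>p w. is_walk E s w \<and> X = rib p w)" unfolding ff_def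
    by (auto split: if_splits)
  hence ex: "\<exists>w. \<exists>p. is_walk E s w \<and> X = rib p w" by blast
  have "\<exists>p. is_walk E s (SOME w. \<exists>p. is_walk E s w \<and> X = rib p w) \<and> X = rib p (SOME w. \<exists>p. is_walk E s w \<and> X = rib p w)"
    by (rule someI_ex[OF ex])
  hence "last (SOME w. \<exists>p. is_walk E s w \<and> X = rib p w) \<in> V" using walk_last_V[OF EV sV] by blast
  thus ?thesis using h c unfolding ff_def by auto
qed

lemma focused_rib:
  assumes "X \<in> producible strg TT" "\<exists>t\<in>X. tlabel t = Some ''l''"
  shows "\<exists>p w. is_walk E s w \<and> X = rib p w"
  using prod_PP[OF assms(1)]
proof (cases rule: PP_cases)
  case (r p w) thus ?thesis by blast
next
  case (b k a c) thus ?thesis using assms(2) brick_nolabel by force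
qed

lemma TT_focused: "X \<in> TT \<Longrightarrow> \<exists>t\<in>X. tlabel t = Some ''l'' \<Longrightarrow> X = rib (0,0) [s]"
  unfolding TT_def bricks_def using brick_nolabel by force

lemma brick_TT: "(a,b) \<in> E \<Longrightarrow> tb (0,0) (newk w) a b \<in> TT"
  unfolding TT_def bricks_def newk_def by auto

end

lemma comb_ok:
  assumes w: "w \<noteq> []"
  shows "combinable strg (rib p w) (tb (0,0) (newk w) (last w) u) (rib p (w @ [u]))"
proof -
  obtain n where n: "length w = Suc n" using w by (cases w) auto
  define r :: nat where "r = (if odd (Suc n) then 1 else 0)"
  let ?X = "tb (newq p w) (newk w) (last w) u"
  have tr: "translate (newq p w) (tb (0,0) (newk w) (last w) u) = ?X"
    by (simp add: translate_tb padd0)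
  have nn: "(w @ [u]) ! n = w ! n" "last w = w ! n" using n w by (simp_all add: nth_append last_conv_nth)
  have xL: "tbL (newq p w) (newk w) (last w) = mk p (w @ [u]) (Suc n, r)"
    using n nn by (auto simp: tbL_def mk_def newq_def newk_def r_def)
  have xLin: "tbL (newq p w) (newk w) (last w) \<in> ?X" by (simp add: tb_LR)
  have c1: "(n, r) \<in> cells w" "(Suc n, 1 - r) \<in> cells w"
    using n by (auto simp: cells_def m0_def m1_def r_def)
  have m1: "mk p (w @ [u]) (n, r) = mk p w (n, r)" "mk p (w @ [u]) (Suc n, 1 - r) = mk p w (Suc n, 1 - r)"
    unfolding mk_def using ty_snoc[OF c1(1), of u] ty_snoc[OF c1(2), of u] by (simp_all del: ty.simps)
  have in1: "mk p w (n, r) \<in> rib p w" "mk p w (Suc n, 1 - r) \<in> rib p w"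
    using c1 unfolding rib_def by auto
  have ne: "mk p w (n, r) \<noteq> mk p w (Suc n, 1 - r)" by (simp add: mk_def)
  have fin: "finite (rib p w)" "finite ?X" using rib_asm[of p w] brick_asm[of "newq p w" "newk w" "last w" u]
    unfolding is_assembly_def by simp_all
  have "cut_weight strg (rib p w) ?X \<ge>
     edge_weight strg (mk p w (n, r)) (tbL (newq p w) (newk w) (last w)) +
     edge_weight strg (mk p w (Suc n, 1 - r)) (tbL (newq p w) (newk w) (last w))"
    by (rule cut_ge2[of strg, OF strg_nonneg fin in1 ne xLin])
  moreover have "edge_weight strg (mk p w (n, r)) (tbL (newq p w) (newk w) (last w)) = 1/2"
    using e4[of "Suc n" r p "w @ [u]"] xL m1 r_def by simp
  moreover have "edge_weight strg (mk p w (Suc n, 1 - r)) (tbL (newq p w) (newk w) (last w)) = 1/2"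
    using e5[of "Suc n" r p "w @ [u]"] xL m1 r_def by simp
  ultimately have cut: "cut_weight strg (rib p w) ?X \<ge> 1" by simp
  have asmC: "is_assembly (rib p w \<union> ?X)" using rib_asm[of p "w @ [u]"] rib_snoc[OF w, of p u] by simp
  show ?thesis unfolding combinable_def Let_def
    using rib_asm brick_asm tr rib_snoc_disj[OF w] rib_snoc[OF w] cut asmC
    by (intro conjI exI[of _ "newq p w"]) auto
qed


context sys begin

lemma seq_struct:
  assumes vs: "valid_seq strg TT S" and fo: "focused ''l'' S" and na: "nascent TT S"
  shows "\<exists>W. is_walk E s W \<and> length W = length S \<and> (\<forall>i<length S. S!i = rib (0,0) (take (Suc i) W))"
proof -
  have Sne: "S \<noteq> []" and setS: "set S \<subseteq> producible strg TT"
    and stp: "\<And>i. Suc i < length S \<Longrightarrow> (\<exists>b\<in>producible strg TT. combinable strg (S ! i) b (S ! Suc i))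
        \<or> (\<exists>b. breakable strg (S ! i) (S ! Suc i) b)"
    using vs unfolding valid_seq_def by auto
  have lab: "\<And>i. i < length S \<Longrightarrow> \<exists>t\<in>S!i. tlabel t = Some ''l''"
    using fo unfolding focused_def by auto
  have main: "n < length S \<Longrightarrow> \<exists>W. is_walk E s W \<and> length W = Suc n \<and> (\<forall>i\<le>n. S!i = rib (0,0) (take (Suc i) W))" for n
  proof (induction n)
    case 0
    have "S!0 \<in> TT" using na Sne unfolding nascent_def by (simp add: hd_conv_nth)
    hence "S!0 = rib (0,0) [s]" using TT_focused lab[OF 0] by blast
    thus ?case using walk_single[of E s] by (intro exI[of _ "[s]"]) auto
  next
    case (Suc n)
    then obtain W where W: "is_walk E s W" "length W = Suc n" "\<forall>i\<le>n. S!i = rib (0,0) (take (Suc i) W)"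
      by auto
    have Sn: "S!n = rib (0,0) W" using W(2,3) by auto
    have Snp: "S!n \<in> producible strg TT" using setS Suc.prems by auto
    have "\<exists>c. (last W, c) \<in> E \<and> S ! Suc n = rib (0,0) (W @ [c])"
    proof -
      from stp[OF Suc.prems] show ?thesis
      proof
        assume "\<exists>b\<in>producible strg TT. combinable strg (S ! n) b (S ! Suc n)"
        then obtain b where b: "b \<in> producible strg TT" "combinable strg (S ! n) b (S ! Suc n)" by blast
        show ?thesis using step_rib[OF W(1) prod_PP[OF b(1)]] b(2) Sn by simp
      next
        assume "\<exists>b. breakable strg (S ! n) (S ! Suc n) b"
        thus ?thesis using stable_not_breakable[OF PP_stable[OF prod_PP[OF Snp]]] by blast
      qed
    qed
    then obtain c where c: "(last W, c) \<in> E" "S ! Suc n = rib (0,0) (W @ [c])" by blast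
    have "\<forall>i\<le>Suc n. S!i = rib (0,0) (take (Suc i) (W @ [c]))"
    proof (intro allI impI)
      fix i assume i: "i \<le> Suc n"
      show "S!i = rib (0,0) (take (Suc i) (W @ [c]))"
      proof (cases "i \<le> n")
        case True thus ?thesis using W(2,3) by simp
      next
        case False
        hence "i = Suc n" using i by simp
        thus ?thesis using c W(2) by simp
      qed
    qed
    thus ?case using walk_snoc[OF W(1) c(1)] W(2) by (intro exI[of _ "W @ [c]"]) auto
  qed
  obtain n where n: "length S = Suc n" using Sne by (cases S) auto
  from main[of n] n obtain W where "is_walk E s W" "length W = Suc n" "\<forall>i\<le>n. S!i = rib (0,0) (take (Suc i) W)"
    by auto
  thus ?thesis using n by (intro exI[of _ W]) auto
qed

lemma nascent_fprime:
  assumes vs: "valid_seq strg TT S" and W: "is_walk E s W" "length W = length S"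
    "\<forall>i<length S. S!i = rib (0,0) (take (Suc i) W)"
  shows "fprime ff S = W"
proof (rule fprime_eq)
  show "length S = length W" using W by simp
  fix i assume i: "i < length S"
  have "S!i \<in> producible strg TT" using vs i unfolding valid_seq_def by auto
  hence "ff (S!i) = Some (last (take (Suc i) W))"
    using ff_rib walk_take[OF W(1), of i] W(3) i by simp
  thus "ff (S!i) = Some (W!i)" using last_take[of i W] W(2) i by simp
qed

lemma fuel_nascent:
  assumes W: "length W = length S" "\<forall>i<length S. S!i = rib (0,0) (take (Suc i) W)"
  shows "fuel S = 2 * (length S - 1)"
proof -
  have "fuel_step (S!i) (S!Suc i) = 2" if i: "i < length S - 1" for i
  proof -
    have c1: "card (S!i) = 2 * Suc i + 1" using W i card_rib[of "take (Suc i) W" "(0,0)"]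
      by (cases W) auto
    have c2: "card (S!Suc i) = 2 * Suc (Suc i) + 1" using W i card_rib[of "take (Suc (Suc i)) W" "(0,0)"]
      by (cases W) auto
    show ?thesis using c1 c2 by (simp add: fuel_step_def)
  qed
  hence "fuel S = (\<Sum>i<length S - 1. (2::nat))" unfolding fuel_def by simp
  thus ?thesis by simp
qed

end


context sys begin

lemma prod_brick: "(a,b) \<in> E \<Longrightarrow> tb (0,0) (newk w) a b \<in> producible strg TT"
  using brick_TT producible.init by blast

lemma rib_focused: "\<exists>t\<in>rib p w. tlabel t = Some ''l''"
  using rib_has_label by blast

lemma cond2:
  assumes W: "is_walk E s W"
  shows "\<exists>S. nascent TT S \<and> focused ''l'' S \<and> valid_seq strg TT S \<and> fprime ff S = W"
proof -
  have Wne: "W \<noteq> []" and hdW: "hd W = s" using W unfolding is_walk_def by auto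
  have edges: "\<And>i. Suc i < length W \<Longrightarrow> (W!i, W!Suc i) \<in> E" using W unfolding is_walk_def by auto
  define S where "S = map (\<lambda>i. rib (0,0) (take (Suc i) W)) [0..<length W]"
  have lenS: "length S = length W" unfolding S_def by simp
  have Si: "\<And>i. i < length S \<Longrightarrow> S!i = rib (0,0) (take (Suc i) W)" unfolding S_def by simp
  have t1: "take (Suc 0) W = [s]" using Wne hdW by (cases W) auto
  have combi: "combinable strg (rib (0,0) (take (Suc i) W)) (tb (0,0) (newk (take (Suc i) W)) (W!i) (W!Suc i))
      (rib (0,0) (take (Suc (Suc i)) W))" if i: "Suc i < length W" for i
  proof -
    have "take (Suc (Suc i)) W = take (Suc i) W @ [W ! Suc i]" using i by (simp add: take_Suc_conv_app_nth)
    moreover have "last (take (Suc i) W) = W!i" using i by (simp add: last_take)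
    moreover have "take (Suc i) W \<noteq> []" using Wne by simp
    ultimately show ?thesis using comb_ok[of "take (Suc i) W" "(0,0)" "W ! Suc i"] by simp
  qed
  have prodi: "rib (0,0) (take (Suc i) W) \<in> producible strg TT" if "i < length W" for i
    using that
  proof (induction i)
    case 0
    have "rib (0,0) [s] \<in> TT" unfolding TT_def by simp
    thus ?case using t1 producible.init by simp
  next
    case (Suc i)
    have "tb (0,0) (newk (take (Suc i) W)) (W!i) (W!Suc i) \<in> producible strg TT"
      using prod_brick edges[OF Suc.prems] by blast
    thus ?case using producible.comb[OF Suc.IH _ combi[OF Suc.prems]] Suc.prems by simp
  qed
  have Sne: "S \<noteq> []" using Wne lenS by auto
  have "hd S = rib (0,0) [s]" using Sne Si[of 0] t1 by (simp add: hd_conv_nth)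
  hence "nascent TT S" unfolding nascent_def TT_def using Sne by simp
  moreover have "focused ''l'' S" unfolding focused_def S_def using rib_focused by auto
  moreover have "valid_seq strg TT S" unfolding valid_seq_def
  proof (intro conjI allI impI)
    show "S \<noteq> []" using Wne lenS by auto
    show "set S \<subseteq> producible strg TT" unfolding S_def using prodi by auto
    fix i assume i: "Suc i < length S"
    have "tb (0,0) (newk (take (Suc i) W)) (W!i) (W!Suc i) \<in> producible strg TT"
      using prod_brick edges i lenS by simp
    thus "(\<exists>b\<in>producible strg TT. combinable strg (S ! i) b (S ! Suc i)) \<or> (\<exists>b. breakable strg (S ! i) (S ! Suc i) b)"
      using combi[of i] i lenS Si[of i] Si[of "Suc i"] by auto
  qed
  moreover have "fprime ff S = W"
  proof (rule fprime_eq[OF lenS])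
    fix i assume i: "i < length S"
    have "ff (S!i) = Some (last (take (Suc i) W))"
      using ff_rib[OF prodi walk_take[OF W]] Si i lenS by simp
    thus "ff (S!i) = Some (W!i)" using last_take[of i W] i lenS by simp
  qed
  ultimately show ?thesis by blast
qed

lemma cond3:
  assumes uv: "(u,v) \<in> E" and fo: "focused ''l'' S" and vs: "valid_seq strg TT S" and fp: "fprime ff S = [u]"
  shows "\<exists>R'. focused ''l'' (S @ R') \<and> valid_seq strg TT (S @ R') \<and> fprime ff (S @ R') = [u, v]"
proof -
  have setS: "set S \<subseteq> producible strg TT" using vs unfolding valid_seq_def by auto
  have rb: "\<exists>p w. is_walk E s w \<and> x = rib p w" if "x \<in> set S" for x
    using focused_rib[of x] setS that fo unfolding focused_def by blast
  have "ff x \<noteq> None" if x: "x \<in> set S" for x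
  proof -
    obtain p w where pw: "is_walk E s w" "x = rib p w" using rb[OF x] by blast
    have "rib p w \<in> producible strg TT" using setS x pw(2) by auto
    thus ?thesis using ff_rib[OF _ pw(1)] pw(2) by simp
  qed
  hence "length S = 1" using fprime_len[of S ff] fp by simp
  then obtain X where S: "S = [X]" by (cases S) auto
  obtain p w where w: "is_walk E s w" "X = rib p w" using rb S by auto
  have Xp: "X \<in> producible strg TT" using setS S by simp
  have "ff X = Some (last w)" using ff_rib Xp w by simp
  moreover have "ff X = Some u" using fp S by (simp add: fprime_def split: option.splits)
  ultimately have u: "u = last w" by simp
  have wne: "w \<noteq> []" using walk_ne[OF w(1)] .
  let ?X' = "rib p (w @ [v])"
  let ?b = "tb (0,0) (newk w) (last w) v"
  have bp: "?b \<in> producible strg TT" using prod_brick uv u by simp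
  have cb: "combinable strg X ?b ?X'" using comb_ok[OF wne] w by simp
  have X'p: "?X' \<in> producible strg TT" by (rule producible.comb[OF Xp bp cb])
  have w': "is_walk E s (w @ [v])" using walk_snoc[OF w(1)] uv u by simp
  have "focused ''l'' (S @ [?X'])" using fo S rib_focused unfolding focused_def by auto
  moreover have "valid_seq strg TT (S @ [?X'])" unfolding valid_seq_def
  proof (intro conjI allI impI)
    show "S @ [?X'] \<noteq> []" by simp
    show "set (S @ [?X']) \<subseteq> producible strg TT" using Xp X'p S by simp
    fix i assume "Suc i < length (S @ [?X'])"
    hence "i = 0" using S by simp
    thus "(\<exists>b\<in>producible strg TT. combinable strg ((S @ [?X']) ! i) b ((S @ [?X']) ! Suc i))
        \<or> (\<exists>b. breakable strg ((S @ [?X']) ! i) ((S @ [?X']) ! Suc i) b)"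
      using bp cb S by auto
  qed
  moreover have "fprime ff (S @ [?X']) = [u, v]"
    using \<open>ff X = Some u\<close> ff_rib[OF X'p w'] S by (simp add: fprime_def)
  ultimately show ?thesis by blast
qed

lemma walks_fe: "walks_fuel_efficiently strg TT ''l'' V E s"
  unfolding walks_fuel_efficiently_def
proof (intro exI conjI)
  have c1: "\<forall>a v. ff a = Some v \<longrightarrow> a \<in> producible strg TT \<and> v \<in> V" using ff_Some by blast
  have c2: "\<forall>S. focused ''l'' S \<and> nascent TT S \<and> valid_seq strg TT S \<longrightarrow> is_walk E s (fprime ff S)"
  proof (intro allI impI)
    fix S assume h: "focused ''l'' S \<and> nascent TT S \<and> valid_seq strg TT S"
    then obtain W where W: "is_walk E s W" "length W = length S" "\<forall>i<length S. S!i = rib (0,0) (take (Suc i) W)"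
      using seq_struct by blast
    thus "is_walk E s (fprime ff S)" using nascent_fprime h by simp
  qed
  have c3: "\<forall>W. is_walk E s W \<longrightarrow> (\<exists>S. nascent TT S \<and> focused ''l'' S \<and> valid_seq strg TT S \<and> fprime ff S = W)"
    using cond2 by blast
  have c4: "\<forall>u v S. (u, v) \<in> E \<and> focused ''l'' S \<and> valid_seq strg TT S \<and> fprime ff S = [u] \<longrightarrow>
          (\<exists>R'. focused ''l'' (S @ R') \<and> valid_seq strg TT (S @ R') \<and> fprime ff (S @ R') = [u, v])"
    using cond3 by blast
  show "walking_fun strg TT ''l'' V E s ff"
    unfolding walking_fun_def using c1 c2 c3 c4 by blast
  show "\<forall>S. focused ''l'' S \<and> nascent TT S \<and> valid_seq strg TT S \<longrightarrow>
      real (fuel S) / real (length (fprime ff S)) \<le> (2::real)"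
  proof (intro allI impI)
    fix S assume h: "focused ''l'' S \<and> nascent TT S \<and> valid_seq strg TT S"
    then obtain W where W: "is_walk E s W" "length W = length S" "\<forall>i<length S. S!i = rib (0,0) (take (Suc i) W)"
      using seq_struct by blast
    have fp: "fprime ff S = W" using nascent_fprime h W by simp
    have f: "fuel S = 2 * (length S - 1)" using fuel_nascent W(2,3) by simp
    have L: "length S \<ge> 1" using h unfolding nascent_def by (cases S) auto
    have "real (2 * (length S - 1)) \<le> 2 * real (length S)" by simp
    thus "real (fuel S) / real (length (fprime ff S)) \<le> 2"
      using f fp W(2) L by (simp add: divide_le_eq)
  qed
qed

lemma TT_props:
  "finite TT" "\<forall>a\<in>TT. stable_asm strg a" "card TT \<le> 2 * (card V + card E)" "\<forall>a\<in>TT. card a \<le> 3"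
proof -
  have fE: "finite E" using finite_subset[OF EV] finV by blast
  show "finite TT" unfolding TT_def bricks_def using fE by simp
  show "\<forall>a\<in>TT. stable_asm strg a" using PP_stable prod_PP producible.init by blast
  have "card TT \<le> Suc (card bricks)" unfolding TT_def by (rule card_insert_le_m1) simp_all
  also have "card bricks \<le> card E + card E" unfolding bricks_def
    by (rule order.trans[OF card_Un_le add_mono[OF card_image_le[OF fE] card_image_le[OF fE]]])
  finally have "card TT \<le> Suc (2 * card E)" by simp
  moreover have "card V \<ge> 1" using sV finV by (cases "card V") auto
  ultimately show "card TT \<le> 2 * (card V + card E)" by simp
  show "\<forall>a\<in>TT. card a \<le> 3"
  proof
    fix a assume "a \<in> TT"
    hence "a = rib (0,0) [s] \<or> (\<exists>k x y. a = tb (0,0) k x y)" unfolding TT_def bricks_def by auto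
    thus "card a \<le> 3"
    proof
      assume "a = rib (0,0) [s]" thus ?thesis using card_rib[of "[s]"] by simp
    next
      assume "\<exists>k x y. a = tb (0,0) k x y"
      then obtain k x y where "a = tb (0,0) k x y" by blast
      thus ?thesis by (simp add: tb_LR card_insert_if)
    qed
  qed
qed

end

theorem theorem1:
  shows "\<exists>c1 c2 :: nat. \<forall>(V :: nat set) (E :: (nat \<times> nat) set) s.
     finite V \<and> E \<subseteq> V \<times> V \<and> s \<in> V \<longrightarrow>
     (\<exists>(str :: nat \<Rightarrow> rat) (T :: nat assembly set) (l :: string).
        finite T \<and> (\<forall>a\<in>T. stable_asm str a) \<and>
        walks_fuel_efficiently str T l V E s \<and>
        card T \<le> c1 * (card V + card E) \<and>
        (\<forall>a\<in>T. card a \<le> c2))"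
proof (rule exI[of _ 2], rule exI[of _ 3], intro allI impI)
  fix V :: "nat set" and E :: "(nat \<times> nat) set" and s
  assume h: "finite V \<and> E \<subseteq> V \<times> V \<and> s \<in> V"
  interpret sys V E s using h by unfold_locales auto
  show "\<exists>(str :: nat \<Rightarrow> rat) (T :: nat assembly set) (l :: string).
        finite T \<and> (\<forall>a\<in>T. stable_asm str a) \<and>
        walks_fuel_efficiently str T l V E s \<and>
        card T \<le> 2 * (card V + card E) \<and>
        (\<forall>a\<in>T. card a \<le> 3)"
    using TT_props walks_fe by blast
qed


end
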